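(* Let $h_1,h_2,g_1,g_2>0$ be real numbers. For $\Delta_1,\Delta_2>0$ and $\Omega\subseteq\{1,2\}$ define (logarithms base $2$, $[x]^+=\max\{x,0\}$) \begin{align*} R(\emptyset;\Delta_1,\Delta_2)&=\Big[\log\Big(1+\tfrac{h_1^2}{1+\Delta_1}+\tfrac{h_2^2}{1+\Delta_2}\Big)\Big]^+,\\ R(\{1\};\Delta_1,\Delta_2)&=\Big[\log(1+g_1^2)+\log\Big(1+\tfrac{h_2^2}{1+\Delta_2}\Big)-\log\tfrac{1+\Delta_1}{\Delta_1}\Big]^+,\\ R(\{2\};\Delta_1,\Delta_2)&=\Big[\log(1+g_2^2)+\log\Big(1+\tfrac{h_1^2}{1+\Delta_1}\Big)-\log\tfrac{1+\Delta_2}{\Delta_2}\Big]^+,\\ R(\{1,2\};\Delta_1,\Delta_2)&=\Big[\log(1+g_1^2+g_2^2)-\log\tfrac{1+\Delta_1}{\Delta_1}-\log\tfrac{1+\Delta_2}{\Delta_2}\Big]^+, \end{align*} and consider the problem $\max_{\Delta_2>0}\max_{\Delta_1>0}\min_{\Omega\subseteq\{1,2\}}R(\Omega;\Delta_1,\Delta_2)$. Let $$\delta_1:=\frac{(1+g_1^2+g_2^2)(1+h_1^2+h_2^2)+(1+g_2^2)h_1^2h_2^2}{g_2^2(1+g_1^2+g_2^2)(1+h_1^2)},\qquad \delta_2:=\frac{(1+g_1^2)(1+h_2^2)}{g_2^2},$$ $\mathcal I_1=(0,\delta_1)$, $\mathcal I_2=[\delta_1,\delta_2)$, $\mathcal I_3=[\delta_2,\infty)$,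 and $A:=h_1^2(1+h_1^2)-h_2^2(1+h_1^2+g_1^2+g_2^2)$, $B:=2h_1^2(1+h_1^2)$, $C:=h_1^2(1+h_1^2+h_2^2)$, $\delta_3:=\frac{-B-\sqrt{B^2-4AC}}{2A}$. Then an optimal solution $(\Delta_1^*,\Delta_2^* )$ of this problem is: \begin{enumerate} \item if $A\ge 0$ or $\delta_3\in\mathcal I_3$: $\Delta_2^*=\delta_2$ and $\Delta_1^*=\frac{(1+h_1^2)\delta_2+(1+h_1^2+h_2^2)}{(g_1^2+g_2^2)\delta_2-(1+h_2^2)}=\frac{(1+h_1^2)\delta_2+(1+h_1^2+h_2^2)}{g_1^2(\delta_2+(1+h_2^2))}$; \item if $A<0$ and $\delta_3\in\mathcal I_1$: $\Delta_2^*=\delta_1$ and $\Delta_1^*=\frac{(1+h_1^2)\delta_1+(1+h_1^2+h_2^2)}{(g_1^2+g_2^2)\delta_1-(1+h_2^2)}=\frac{(1+g_2^2)(1+h_1^2)}{g_1^2}$; \item if $A<0$ and $\delta_3\in\mathcal I_2$: $\Delta_2^*=\delta_3$ and $\Delta_1^*=\frac{(1+h_1^2)\delta_3+(1+h_1^2+h_2^2)}{(g_1^2+g_2^2)\delta_3-(1+h_2^2)}$. \end{enumerate}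
   Context: This concerns the full-duplex two-relay Gaussian diamond network (source, relays $A_1,A_2$, destination) with channel magnitudes $h_i$ (source to relay $i$) and $g_i$ (relay $i$ to destination), in which relay $i$ performs quantize-map-and-forward with a Gaussian vector quantizer of distortion $\Delta_i$; $\min_\Omega R(\Omega;\Delta_1,\Delta_2)$ is the resulting achievable rate, and the problem is to choose the distortions maximizing it given the channel magnitudes. *)

theory Defs
  imports Complex_Main
begin

definition pos_part :: "real \<Rightarrow> real" where
  "pos_part x = max x 0"

definition Rate :: "real \<Rightarrow> real \<Rightarrow> real \<Rightarrow> real \<Rightarrow> nat set \<Rightarrow> real \<Rightarrow> real \<Rightarrow> real" where
  "Rate h1 h2 g1 g2 \<Omega> D1 D2 =
    (if \<Omega> = {} then pos_part (log 2 (1 + h1\<^sup>2 / (1 + D1) + h2\<^sup>2 / (1 + D2)))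
     else if \<Omega> = {1} then pos_part (log 2 (1 + g1\<^sup>2) + log 2 (1 + h2\<^sup>2 / (1 + D2))
                                   - log 2 ((1 + D1) / D1))
     else if \<Omega> = {2} then pos_part (log 2 (1 + g2\<^sup>2) + log 2 (1 + h1\<^sup>2 / (1 + D1))
                                   - log 2 ((1 + D2) / D2))
     else pos_part (log 2 (1 + g1\<^sup>2 + g2\<^sup>2) - log 2 ((1 + D1) / D1) - log 2 ((1 + D2) / D2)))"

definition MinRate :: "real \<Rightarrow> real \<Rightarrow> real \<Rightarrow> real \<Rightarrow> real \<Rightarrow> real \<Rightarrow> real" where
  "MinRate h1 h2 g1 g2 D1 D2 = Min ((\<lambda>\<Omega>. Rate h1 h2 g1 g2 \<Omega> D1 D2) ` Pow {1, 2})"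

definition optimal_QMF :: "real \<Rightarrow> real \<Rightarrow> real \<Rightarrow> real \<Rightarrow> real \<Rightarrow> real \<Rightarrow> bool" where
  "optimal_QMF h1 h2 g1 g2 D1s D2s \<longleftrightarrow>
     D1s > 0 \<and> D2s > 0 \<and>
     (\<forall>D1 D2. D1 > 0 \<longrightarrow> D2 > 0 \<longrightarrow> MinRate h1 h2 g1 g2 D1 D2 \<le> MinRate h1 h2 g1 g2 D1s D2s)"

end

theory Submission
  imports Defs
begin

definition EE :: "real \<Rightarrow> real \<Rightarrow> real \<Rightarrow> real \<Rightarrow> nat set \<Rightarrow> real \<Rightarrow> real \<Rightarrow> real" where
  "EE a b c d \<Omega> x y =
    (if \<Omega> = {} then 1 + a / (1 + x) + b / (1 + y)
     else if \<Omega> = {1} then (1 + c) * (1 + b / (1 + y)) * (x / (1 + x))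
     else if \<Omega> = {2} then (1 + d) * (1 + a / (1 + x)) * (y / (1 + y))
     else (1 + c + d) * (x / (1 + x)) * (y / (1 + y)))"

lemma EE_pos:
  assumes "a > 0" "b > 0" "c > 0" "d > 0" "x > 0" "y > 0"
  shows "EE a b c d \<Omega> x y > 0"
  using assms unfolding EE_def by (auto intro!: mult_pos_pos add_pos_pos divide_pos_pos)

lemma log3: "log 2 (p*q*r) = log 2 p + log 2 q + log 2 r" if "p>0" "q>0" "r>0" for p q r :: real
    using that by (simp add: log_mult)

lemma Rate_EE:
  assumes "h1 > 0" "h2 > 0" "g1 > 0" "g2 > 0" "x > 0" "y > 0"
  shows "Rate h1 h2 g1 g2 \<Omega> x y = pos_part (log 2 (EE (h1^2) (h2^2) (g1^2) (g2^2) \<Omega> x y))"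
proof -
  have p: "0 < 1 + x" "0 < 1+y" "0 < 1 + h1^2/(1+x)" "0 < 1 + h2^2/(1+y)" "0 < 1 + g1^2" "0 < 1+g2^2"
    "0 < 1 + g1^2 + g2^2" "0 < x/(1+x)" "0 < y/(1+y)"
    using assms by (auto intro!: add_pos_nonneg divide_nonneg_pos)
  have l1: "log 2 ((1+x)/x) = - log 2 (x/(1+x))" using assms p by (simp add: log_divide)
  have l2: "log 2 ((1+y)/y) = - log 2 (y/(1+y))" using assms p by (simp add: log_divide)
  have L: "log 2 (p*q*r) = log 2 p + log 2 q + log 2 r" if "p>0" "q>0" "r>0" for p q r :: real
    using that by (simp add: log_mult)
  show ?thesis
  proof (cases "\<Omega> = {}")
    case True then show ?thesis unfolding Rate_def EE_def by simp
  next
    case F0: False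
    show ?thesis
    proof (cases "\<Omega> = {1}")
      case True then show ?thesis unfolding Rate_def EE_def l1 l2 using F0 L[OF p(5) p(4) p(8)] by simp
    next
      case F1: False
      show ?thesis
      proof (cases "\<Omega> = {2}")
        case True then show ?thesis unfolding Rate_def EE_def l1 l2 using F0 F1 L[OF p(6) p(3) p(9)] by simp
      next
        case F2: False
        then show ?thesis unfolding Rate_def EE_def l1 l2 using F0 F1 L[OF p(7) p(8) p(9)] by simp
      qed
    qed
  qed
qed

lemma minrate_le:
  assumes "h1 > 0" "h2 > 0" "g1 > 0" "g2 > 0" "x > 0" "y > 0" "xs > 0" "ys > 0"
    and "i \<in> Pow {1,2}"
    and "\<forall>j\<in>Pow {1,2}. EE (h1^2) (h2^2) (g1^2) (g2^2) i x y \<le> EE (h1^2) (h2^2) (g1^2) (g2^2) j xs ys"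
  shows "MinRate h1 h2 g1 g2 x y \<le> MinRate h1 h2 g1 g2 xs ys"
proof -
  let ?f = "\<lambda>\<Omega>. Rate h1 h2 g1 g2 \<Omega> xs ys"
  have "MinRate h1 h2 g1 g2 xs ys \<in> ?f ` Pow {1,2}"
    unfolding MinRate_def by (rule Min_in) auto
  then obtain j where j: "j \<in> Pow {1,2}" "MinRate h1 h2 g1 g2 xs ys = Rate h1 h2 g1 g2 j xs ys" by auto
  have "MinRate h1 h2 g1 g2 x y \<le> Rate h1 h2 g1 g2 i x y"
    unfolding MinRate_def using assms(9) by (intro Min_le) auto
  also have "\<dots> \<le> Rate h1 h2 g1 g2 j xs ys"
  proof -
    have e: "EE (h1^2) (h2^2) (g1^2) (g2^2) i x y \<le> EE (h1^2) (h2^2) (g1^2) (g2^2) j xs ys"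
      using assms(10) j(1) by blast
    have pp: "EE (h1^2) (h2^2) (g1^2) (g2^2) i x y > 0" using assms by (intro EE_pos) auto
    have "log 2 (EE (h1^2) (h2^2) (g1^2) (g2^2) i x y) \<le> log 2 (EE (h1^2) (h2^2) (g1^2) (g2^2) j xs ys)"
      using e pp by simp
    then show ?thesis using assms by (simp add: Rate_EE pos_part_def)
  qed
  finally show ?thesis using j by simp
qed

lemma amgm2: fixes p q :: real assumes "p > 0" "q > 0" "p*q > 1" shows "p + q > 2"
proof (rule ccontr)
  assume "\<not> p + q > 2"
  then have "(p+q)^2 \<le> 2^2" using assms by (intro power_mono) auto
  moreover have "(p+q)^2 \<ge> 4*(p*q)" using zero_le_power2[of "p - q"] by (simp add: power2_eq_square algebra_simps)
  ultimately show False using assms by simp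
qed

lemma prod_lin:
  fixes P Q P0 Q0 :: real
  assumes "P > 0" "Q > 0" "P0 > 0" "Q0 > 0" "P*Q > P0*Q0"
  shows "(P - P0)*Q0 + (Q - Q0)*P0 > 0"
proof -
  have "(P/P0)*(Q/Q0) > 1" using assms by (simp add: field_simps)
  then have "P/P0 + Q/Q0 > 2" using assms by (intro amgm2) auto
  then have "P*Q0 + Q*P0 > 2*P0*Q0" using assms by (simp add: field_simps)
  then show ?thesis by (simp add: algebra_simps)
qed

lemma lin1:
  fixes a b U W U0 W0 :: real
  assumes "a>0" "b>0" "0<U" "U<1" "0<W" "W<1" "0<U0" "U0<1" "0<W0" "W0<1"
    and "a*U + b*W < a*U0 + b*W0" "(1+b*(1-W))*U > (1+b*(1-W0))*U0" "U*W > U0*W0"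
    and "a*U0 \<ge> b*W0"
  shows False
proof -
  have e3: "(U - U0)*W0 + (W - W0)*U0 > 0" using assms by (intro prod_lin) auto
  have e1: "((1+b*(1-W)) - (1+b*(1-W0)))*U0 + (U - U0)*(1+b*(1-W0)) > 0"
    using assms by (intro prod_lin) (auto intro!: add_pos_nonneg)
  show False
  proof (cases "W \<ge> W0")
    case True
    have "b*(W - W0)*U0 \<ge> 0" using True assms by simp
    then have "(U - U0)*(1+b*(1-W0)) > 0" using e1 by (simp add: algebra_simps)
    moreover have "1+b*(1-W0) > 0" using assms by (simp add: add_pos_nonneg)
    ultimately have "U > U0" by (simp add: zero_less_mult_iff)
    then have "a*U > a*U0" using assms by simp
    moreover have "b*W \<ge> b*W0" using assms True by simp
    ultimately show False using assms by linarith
  next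
    case False
    have "(U - U0)*W0 > (W0 - W)*U0" using e3 by (simp add: algebra_simps)
    then have "a*((U - U0)*W0) > a*((W0 - W)*U0)" using assms by (intro mult_strict_left_mono) auto
    moreover have "a*((W0 - W)*U0) \<ge> b*W0*(W0 - W)"
    proof -
      have "(a*U0)*(W0 - W) \<ge> (b*W0)*(W0 - W)" using False assms by (intro mult_right_mono) auto
      then show ?thesis by (simp add: algebra_simps)
    qed
    ultimately have "W0*(a*(U - U0) + b*(W - W0)) > 0" by (simp add: algebra_simps)
    then have "a*(U - U0) + b*(W - W0) > 0" using assms by (simp add: zero_less_mult_iff)
    then show False using assms by (simp add: algebra_simps)
  qed
qed

lemma lin3:
  fixes a b U W U0 W0 :: real
  assumes "a>0" "b>0" "0<U" "0<W" "0<U0" "0<W0"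
    and "a*U + b*W < a*U0 + b*W0" "U*W > U0*W0" "a*U0 = b*W0"
  shows False
proof -
  have e3: "(U - U0)*W0 + (W - W0)*U0 > 0" using assms by (intro prod_lin) auto
  then have "a*((U - U0)*W0 + (W - W0)*U0) > 0" using assms by simp
  also have "a*((U - U0)*W0 + (W - W0)*U0) = W0*(a*(U - U0) + b*(W - W0))"
  proof -
    have "a*U0*(W - W0) = b*W0*(W - W0)" using assms(9) by simp
    then show ?thesis by (simp add: algebra_simps)
  qed
  finally have "a*(U - U0) + b*(W - W0) > 0" using assms by (simp add: zero_less_mult_iff)
  then show False using assms by (simp add: algebra_simps)
qed

lemma EE_UW:
  assumes "x > 0" "y > 0"
  shows "EE a b c d {} x y = 1 + a*(1 - x/(1+x)) + b*(1 - y/(1+y))"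
    "EE a b c d {1} x y = (1+c)*(1 + b*(1 - y/(1+y)))*(x/(1+x))"
    "EE a b c d {2} x y = (1+d)*(1 + a*(1 - x/(1+x)))*(y/(1+y))"
    "EE a b c d {1,2} x y = (1+c+d)*(x/(1+x))*(y/(1+y))"
proof -
  have i: "1 - x/(1+x) = 1/(1+x)" "1 - y/(1+y) = 1/(1+y)" using assms by (simp_all add: field_simps)
  show "EE a b c d {} x y = 1 + a*(1 - x/(1+x)) + b*(1 - y/(1+y))"
    "EE a b c d {1} x y = (1+c)*(1 + b*(1 - y/(1+y)))*(x/(1+x))"
    "EE a b c d {2} x y = (1+d)*(1 + a*(1 - x/(1+x)))*(y/(1+y))"
    "EE a b c d {1,2} x y = (1+c+d)*(x/(1+x))*(y/(1+y))"
    unfolding EE_def i by auto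
qed

lemma global:
  fixes a b c d x y xs ys :: real
  assumes pos: "a>0" "b>0" "c>0" "d>0" "x>0" "y>0" "xs>0" "ys>0"
    and E03: "EE a b c d {} xs ys = EE a b c d {1,2} xs ys"
    and H: "(EE a b c d {1} xs ys = EE a b c d {1,2} xs ys \<and> a*(xs/(1+xs)) \<ge> b*(ys/(1+ys)))
          \<or> (EE a b c d {2} xs ys = EE a b c d {1,2} xs ys \<and> b*(ys/(1+ys)) \<ge> a*(xs/(1+xs)))
          \<or> a*(xs/(1+xs)) = b*(ys/(1+ys))"
  shows "\<exists>i\<in>Pow {1,2}. EE a b c d i x y \<le> EE a b c d {} xs ys"
proof (rule ccontr)
  assume nt: "\<not> ?thesis"
  have g: "EE a b c d i x y > EE a b c d {} xs ys" if "i \<in> Pow {1,2}" for i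
  proof -
    have "\<not> EE a b c d i x y \<le> EE a b c d {} xs ys" using that nt by blast
    then show ?thesis by simp
  qed
  define U where "U = x/(1+x)"
  define W where "W = y/(1+y)"
  define U0 where "U0 = xs/(1+xs)"
  define W0 where "W0 = ys/(1+ys)"
  have r: "0<U" "U<1" "0<W" "W<1" "0<U0" "U0<1" "0<W0" "W0<1"
    unfolding U_def W_def U0_def W0_def using pos by (auto simp: field_simps)
  note e = EE_UW[OF pos(5,6), of a b c d, folded U_def W_def]
  note es = EE_UW[OF pos(7,8), of a b c d, folded U0_def W0_def]
  have g0: "a*U + b*W < a*U0 + b*W0" using g[of "{}"] e(1) es(1) by (simp add: algebra_simps)
  have g3: "U*W > U0*W0"
  proof -
    have "(1+c+d)*(U*W) > (1+c+d)*(U0*W0)" using g[of "{1,2}"] E03 e(4) es(4) by (simp add: algebra_simps)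
    then show ?thesis using pos by (simp add: mult_less_cancel_left_pos add_pos_pos)
  qed
  consider (c1) "EE a b c d {1} xs ys = EE a b c d {1,2} xs ys" "a*U0 \<ge> b*W0"
    | (c2) "EE a b c d {2} xs ys = EE a b c d {1,2} xs ys" "b*W0 \<ge> a*U0"
    | (c3) "a*U0 = b*W0" using H unfolding U0_def W0_def by blast
  then show False
  proof cases
    case c1
    have "(1+c)*((1 + b*(1 - W))*U) > (1+c)*((1 + b*(1 - W0))*U0)"
      using g[of "{1}"] E03 c1(1) e(2) es(2) by (simp add: algebra_simps)
    then have "(1 + b*(1 - W))*U > (1 + b*(1 - W0))*U0" using pos by simp
    then show False using lin1[OF pos(1,2) r g0 _ g3 c1(2)] by simp
  next
    case c2
    have "(1+d)*((1 + a*(1 - U))*W) > (1+d)*((1 + a*(1 - U0))*W0)"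
      using g[of "{2}"] E03 c2(1) e(3) es(3) by (simp add: algebra_simps)
    then have "(1 + a*(1 - U))*W > (1 + a*(1 - U0))*W0" using pos by simp
    moreover have "b*W + a*U < b*W0 + a*U0" using g0 by simp
    moreover have "W*U > W0*U0" using g3 by (simp add: mult.commute)
    ultimately show False using lin1[OF pos(2,1) r(3,4,1,2,7,8,5,6)] c2(2) by blast
  next
    case c3
    show False using lin3[OF pos(1,2) r(1,3,5,7) g0 g3 c3] .
  qed
qed

lemma opt_crit:
  fixes h1 h2 g1 g2 xs ys :: real
  assumes pos: "h1>0" "h2>0" "g1>0" "g2>0" "xs>0" "ys>0"
  defines "E \<equiv> EE (h1^2) (h2^2) (g1^2) (g2^2)"
  assumes E03: "E {} xs ys = E {1,2} xs ys"
    and E1: "E {1} xs ys \<ge> E {1,2} xs ys" and E2: "E {2} xs ys \<ge> E {1,2} xs ys"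
    and H: "(E {1} xs ys = E {1,2} xs ys \<and> h1^2*(xs/(1+xs)) \<ge> h2^2*(ys/(1+ys)))
          \<or> (E {2} xs ys = E {1,2} xs ys \<and> h2^2*(ys/(1+ys)) \<ge> h1^2*(xs/(1+xs)))
          \<or> h1^2*(xs/(1+xs)) = h2^2*(ys/(1+ys))"
  shows "optimal_QMF h1 h2 g1 g2 xs ys"
  unfolding optimal_QMF_def
proof (intro conjI allI impI)
  fix D1 D2 :: real assume D: "D1 > 0" "D2 > 0"
  obtain i where i: "i \<in> Pow {1,2}" "E i D1 D2 \<le> E {} xs ys"
    using global[of "h1^2" "h2^2" "g1^2" "g2^2" D1 D2 xs ys] pos D E03 H unfolding E_def by auto
  have "\<forall>j\<in>Pow {1,2}. E i D1 D2 \<le> E j xs ys"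
  proof
    fix j :: "nat set" assume "j \<in> Pow {1,2}"
    then have "j = {} \<or> j = {1} \<or> j = {2} \<or> j = {1,2}" by auto
    moreover have "E {} xs ys \<le> E j xs ys" if "j = {} \<or> j = {1} \<or> j = {2} \<or> j = {1,2}"
      using that E03 E1 E2 by auto
    ultimately show "E i D1 D2 \<le> E j xs ys" using i by force
  qed
  then show "MinRate h1 h2 g1 g2 D1 D2 \<le> MinRate h1 h2 g1 g2 xs ys"
    using minrate_le[OF pos(1-4) D pos(5,6) i(1)] unfolding E_def by blast
qed (use pos in auto)

definition D1f :: "real \<Rightarrow> real \<Rightarrow> real \<Rightarrow> real \<Rightarrow> real \<Rightarrow> real" where
  "D1f a b c d y = ((1 + a) * y + (1 + a + b)) / ((c + d) * y - (1 + b))"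

lemma D1f_pos: assumes "a>0" "b>0" "c>0" "d>0" "y>0" "(c+d)*y > 1+b" shows "D1f a b c d y > 0"
  using assms unfolding D1f_def by (intro divide_pos_pos) (auto intro!: add_pos_pos mult_pos_pos)

lemma rel_UW: assumes "x > (0::real)" shows "x*(1 - x/(1+x)) = x/(1+x)" "0 < x/(1+x)" "x/(1+x) < 1"
proof -
  have x1: "1 + x \<noteq> 0" using assms by simp
  show "x*(1 - x/(1+x)) = x/(1+x)" using x1 by (simp add: field_simps)
  show "0 < x/(1+x)" "x/(1+x) < 1" using assms by simp_all
qed

lemma F1gen:
  assumes "x>0" "y>0" "x*((c+d)*y - (1+b)) = (1+a)*y + (1+a+b)"
  shows "EE a b c d {} x y = EE a b c d {1,2} x y"
proof -
  define U where "U = x/(1+x)"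
  define W where "W = y/(1+y)"
  have rx: "x*(1-U) - U = 0" and ry: "y*(1-W) - W = 0"
    using rel_UW[OF assms(1)] rel_UW[OF assms(2)] unfolding U_def W_def by simp_all
  have G: "x*((c+d)*y - (1+b)) - ((1+a)*y + (1+a+b)) = 0" using assms(3) by simp
  have "(1 + a*(1 - U) + b*(1 - W)) - (1+c+d)*U*W
     = -(1-U)*(1-W)*(x*((c+d)*y - (1+b)) - ((1+a)*y + (1+a+b)))
       + (x*(1-U) - U)*((c+d)*(W + (y*(1-W) - W)) - (1+b)*(1-W))
       + U*(c+d)*(y*(1-W) - W) - (1+a)*(y*(1-W) - W)*(1-U)"
    by (simp add: algebra_simps)
  also have "\<dots> = 0" unfolding G rx ry by simp
  finally show ?thesis using EE_UW[OF assms(1,2), of a b c d] unfolding U_def W_def by simp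
qed

lemma F1:
  assumes "a>0" "b>0" "c>0" "d>0" "y>0" "(c+d)*y > 1+b"
  shows "EE a b c d {} (D1f a b c d y) y = EE a b c d {1,2} (D1f a b c d y) y"
  using assms D1f_pos[OF assms] by (intro F1gen) (auto simp: D1f_def)

lemma F2:
  assumes "x>0" "y>0"
  shows "EE a b c d {1} x y - EE a b c d {1,2} x y = (x/(1+x))*(1 - y/(1+y)) * ((1+c)*(1+b) - d*y)"
proof -
  define U where "U = x/(1+x)"
  define W where "W = y/(1+y)"
  have ry: "y*(1-W) - W = 0"
    using rel_UW[OF assms(2)] unfolding W_def by simp_all
  have "(1+c)*(1 + b*(1 - W))*U - (1+c+d)*U*W - U*(1-W)*((1+c)*(1+b) - d*y) = U*d*(y*(1-W) - W)"
    by (simp add: algebra_simps)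
  also have "\<dots> = 0" unfolding ry by simp
  finally show ?thesis using EE_UW[OF assms(1,2), of a b c d] unfolding U_def W_def by simp
qed

lemma F3:
  assumes "x>0" "y>0"
  shows "EE a b c d {2} x y - EE a b c d {1,2} x y = (y/(1+y))*(1 - x/(1+x)) * ((1+d)*(1+a) - c*x)"
proof -
  define U where "U = x/(1+x)"
  define W where "W = y/(1+y)"
  have rx: "x*(1-U) - U = 0"
    using rel_UW[OF assms(1)] unfolding U_def by simp_all
  have "(1+d)*(1 + a*(1 - U))*W - (1+c+d)*U*W - W*(1-U)*((1+d)*(1+a) - c*x) = W*c*(x*(1-U) - U)"
    by (simp add: algebra_simps)
  also have "\<dots> = 0" unfolding rx by simp
  finally show ?thesis using EE_UW[OF assms(1,2), of a b c d] unfolding U_def W_def by simp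
qed

lemma F5:
  assumes "a>0" "b>0" "c>0" "d>0" "y>0" "(c+d)*y > 1+b"
  shows "a*(D1f a b c d y/(1 + D1f a b c d y)) - b*(y/(1+y))
     = ((a*(1+a) - b*(1+a+c+d))*y^2 + 2*a*(1+a)*y + a*(1+a+b)) / (((1+a+c+d)*y + a)*(1+y))"
proof -
  define x where "x = D1f a b c d y"
  define N where "N = (1 + a) * y + (1 + a + b)"
  define Dn where "Dn = (c + d) * y - (1 + b)"
  have dn: "Dn > 0" using assms unfolding Dn_def by simp
  have xN: "x*Dn = N" unfolding x_def D1f_def N_def Dn_def using dn Dn_def by simp
  have xp: "x > 0" unfolding x_def using D1f_pos[OF assms] .
  have q: "Dn + N > 0" using dn assms unfolding N_def by (auto intro!: add_pos_pos)
  have SN: "(1+a+c+d)*y + a = Dn + N" unfolding Dn_def N_def by (simp add: algebra_simps)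
  have u: "x/(1 + x) = N/(Dn + N)"
  proof -
    have "x*(Dn+N) = N*(1+x)" using xN by (simp add: algebra_simps)
    then show ?thesis using q xp by (simp add: frac_eq_eq)
  qed
  have y1: "1 + y \<noteq> 0" using assms by simp
  have "a*(x/(1+x)) - b*(y/(1+y)) = (a*N)/(Dn+N) - (b*y)/(1+y)" unfolding u by simp
  also have "\<dots> = ((a*N)*(1+y) - (b*y)*(Dn+N))/((Dn+N)*(1+y))"
    using q y1 by (simp add: diff_frac_eq)
  also have "(a*N)*(1+y) - (b*y)*(Dn+N) = (a*(1+a) - b*(1+a+c+d))*y^2 + 2*a*(1+a)*y + a*(1+a+b)"
    unfolding N_def Dn_def by (simp add: algebra_simps power2_eq_square)
  finally show ?thesis unfolding x_def SN by simp
qed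

lemma quad:
  fixes A B C y :: real
  assumes A: "A < 0" and B: "B \<ge> 0" and C: "C > 0"
  defines "r \<equiv> (- B - sqrt (B^2 - 4*A*C)) / (2*A)"
  shows "0 \<le> y \<Longrightarrow> y \<le> r \<Longrightarrow> A*y^2 + B*y + C \<ge> 0"
    and "y > r \<Longrightarrow> A*y^2 + B*y + C < 0"
    and "A*r^2 + B*r + C = 0"
proof -
  define s where "s = sqrt (B^2 - 4*A*C)"
  have AC: "A*C < 0" using A C by (simp add: mult_neg_pos)
  have "B^2 \<ge> 0" by simp
  then have dpos: "B^2 - 4*A*C \<ge> 0" using AC by linarith
  have s0: "s \<ge> 0" unfolding s_def using dpos by simp
  have ss: "s^2 = B^2 - 4*A*C" unfolding s_def using dpos by simp
  have sB: "s \<ge> B"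
  proof -
    have "B^2 \<le> s^2" using ss AC by simp
    then show ?thesis using s0 B by (simp add: power2_le_iff_abs_le)
  qed
  have key: "4*A*(A*z^2 + B*z + C) = (-2*A*z - B)^2 - s^2" for z
    unfolding ss by (simp add: algebra_simps power2_eq_square)
  have r': "-2*A*r = B + s" unfolding r_def s_def using A by (simp add: field_simps)
  have lin: "-2*A*z - B \<le> s \<longleftrightarrow> z \<le> r" for z
  proof -
    have "-2*A*z - B \<le> s \<longleftrightarrow> (-2*A)*z \<le> (-2*A)*r" using r' by (simp add: algebra_simps)
    also have "\<dots> \<longleftrightarrow> z \<le> r" using A by (intro mult_le_cancel_left_pos) simp
    finally show ?thesis .
  qed
  show "A*y^2 + B*y + C \<ge> 0" if "0 \<le> y" "y \<le> r"
  proof -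
    have u: "-2*A*y - B \<le> s" using lin that by simp
    have l: "-2*A*y - B \<ge> -s" using that A sB by (smt (verit) mult_nonneg_nonneg)
    have "(-2*A*y - B)^2 \<le> s^2" using u l s0 by (simp add: power2_le_iff_abs_le abs_le_iff)
    then have "4*A*(A*y^2 + B*y + C) \<le> 0" using key[of y] by simp
    then show ?thesis using A by (simp add: mult_le_0_iff)
  qed
  show "A*y^2 + B*y + C < 0" if "y > r"
  proof -
    have u: "-2*A*y - B > s" using lin[of y] that by simp
    have "(-2*A*y - B)^2 > s^2" using u s0 by (simp add: power_strict_mono)
    then have "4*A*(A*y^2 + B*y + C) > 0" using key[of y] by simp
    then show ?thesis using A by (simp add: zero_less_mult_iff)
  qed
  show "A*r^2 + B*r + C = 0"
  proof -
    have "(-2*A*r - B) = s" using r' by simp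
    then have "4*A*(A*r^2 + B*r + C) = 0" using key[of r] by simp
    then show ?thesis using A by simp
  qed
qed

lemma D1f_anti:
  assumes "a>0" "b>0" "c>0" "d>0" "(c+d)*y1 > 1+b" "y1 \<le> y2"
  shows "D1f a b c d y2 \<le> D1f a b c d y1"
proof -
  have p1: "(c+d)*y1 - (1+b) > 0" using assms by simp
  have "(c+d)*y1 \<le> (c+d)*y2" using assms by (intro mult_left_mono) auto
  then have p2: "(c+d)*y2 - (1+b) > 0" using assms by linarith
  have "((1+a)*y2 + (1+a+b))*((c+d)*y1 - (1+b)) - ((1+a)*y1 + (1+a+b))*((c+d)*y2 - (1+b))
      = ((1+a)*(1+b) + (1+a+b)*(c+d))*(y1 - y2)" by (simp add: algebra_simps)
  also have "\<dots> \<le> 0" using assms by (intro mult_nonneg_nonpos) (auto intro!: add_nonneg_nonneg)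
  finally have "((1+a)*y2 + (1+a+b))*((c+d)*y1 - (1+b)) \<le> ((1+a)*y1 + (1+a+b))*((c+d)*y2 - (1+b))"
    by simp
  then show ?thesis unfolding D1f_def using p1 p2 by (simp add: divide_le_eq le_divide_eq mult.commute)
qed

lemma delta_facts:
  fixes a b c d :: real
  assumes pos: "a>0" "b>0" "c>0" "d>0"
  defines "\<delta>1 \<equiv> ((1 + c + d) * (1 + a + b) + (1 + d) * a * b) / (d * (1 + c + d) * (1 + a))"
    and "\<delta>2 \<equiv> (1 + c) * (1 + b) / d"
  shows "\<delta>1 > 0" "(c+d)*\<delta>1 > 1+b" "\<delta>1 \<le> \<delta>2" "d*\<delta>2 = (1+c)*(1+b)" "\<delta>2 > 0"
    "c * D1f a b c d \<delta>1 = (1+d)*(1+a)" "(c+d)*\<delta>2 - (1+b) = c*(\<delta>2 + (1+b))"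
proof -
  define N1 where "N1 = (1 + c + d) * (1 + a + b) + (1 + d) * a * b"
  define D where "D = d * (1 + c + d) * (1 + a)"
  have Dp: "D > 0" unfolding D_def using pos by (auto intro!: mult_pos_pos add_pos_pos)
  have N1p: "N1 > 0" unfolding N1_def using pos by (auto intro!: mult_pos_pos add_pos_pos)
  have d1: "\<delta>1 = N1/D" unfolding \<delta>1_def N1_def D_def ..
  show "\<delta>1 > 0" unfolding d1 using Dp N1p by simp
  have "(c+d)*N1 - (1+b)*D = c*(1+c+d)*(1+a+b) + c*a*b"
    unfolding N1_def D_def by (simp add: algebra_simps)
  also have "\<dots> > 0" using pos by (auto intro!: mult_pos_pos add_pos_pos)
  finally have "(c+d)*N1 > (1+b)*D" by simp
  then show g: "(c+d)*\<delta>1 > 1+b" unfolding d1 using Dp by (simp add: less_divide_eq mult.commute)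
  have "(1+c)*(1+b)*(1+c+d)*(1+a) - N1 = c*a*b + (1+c+d)*c*(1+a)*(1+b)"
    unfolding N1_def by (simp add: algebra_simps)
  also have "\<dots> > 0" using pos by (auto intro!: mult_pos_pos add_pos_pos)
  finally have "N1 < (1+c)*(1+b)*(1+c+d)*(1+a)" by linarith
  then have "N1 * d < ((1+c)*(1+b)*(1+c+d)*(1+a)) * d" using pos by (intro mult_strict_right_mono) auto
  then have "N1 * d \<le> (1+c)*(1+b) * D" unfolding D_def by (simp add: algebra_simps)
  then show "\<delta>1 \<le> \<delta>2" unfolding d1 \<delta>2_def using Dp pos by (simp add: divide_le_eq le_divide_eq mult.commute)
  show dd: "d*\<delta>2 = (1+c)*(1+b)" unfolding \<delta>2_def using pos by simp
  show "\<delta>2 > 0" unfolding \<delta>2_def using pos by (auto intro!: mult_pos_pos add_pos_pos)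
  show "(c+d)*\<delta>2 - (1+b) = c*(\<delta>2 + (1+b))" using dd by (simp add: algebra_simps)
  have den: "(c+d)*\<delta>1 - (1+b) > 0" using g by simp
  have "c*((1 + a) * \<delta>1 + (1 + a + b)) = (1+d)*(1+a)*((c + d) * \<delta>1 - (1 + b))"
  proof -
    have "D*(c*((1 + a) * \<delta>1 + (1 + a + b)) - (1+d)*(1+a)*((c + d) * \<delta>1 - (1 + b)))
        = c*((1 + a) * (D*\<delta>1) + (1 + a + b)*D) - (1+d)*(1+a)*((c + d) * (D*\<delta>1) - (1 + b)*D)"
      by (simp add: algebra_simps)
    also have "\<dots> = c*((1 + a) * N1 + (1 + a + b)*D) - (1+d)*(1+a)*((c + d) * N1 - (1 + b)*D)"
      using Dp unfolding d1 by simp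
    also have "\<dots> = 0" unfolding N1_def D_def by (simp add: algebra_simps)
    finally show ?thesis using Dp by simp
  qed
  then show "c * D1f a b c d \<delta>1 = (1+d)*(1+a)" unfolding D1f_def using den
    by (simp add: field_simps)
qed

lemma point:
  fixes h1 h2 g1 g2 a b c d y :: real
  assumes hp: "h1 > 0" "h2 > 0" "g1 > 0" "g2 > 0"
    and ad: "a = h1^2" "b = h2^2" "c = g1^2" "d = g2^2"
    and y: "y > 0" "(c+d)*y > 1+b" "d*y \<le> (1+c)*(1+b)" "c*D1f a b c d y \<le> (1+d)*(1+a)"
    and H: "(d*y = (1+c)*(1+b) \<and> (a*(1+a) - b*(1+a+c+d))*y^2 + 2*a*(1+a)*y + a*(1+a+b) \<ge> 0)
          \<or> (c*D1f a b c d y = (1+d)*(1+a) \<and> (a*(1+a) - b*(1+a+c+d))*y^2 + 2*a*(1+a)*y + a*(1+a+b) \<le> 0)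
          \<or> (a*(1+a) - b*(1+a+c+d))*y^2 + 2*a*(1+a)*y + a*(1+a+b) = 0"
  shows "optimal_QMF h1 h2 g1 g2 (D1f a b c d y) y"
proof -
  have pos: "a>0" "b>0" "c>0" "d>0" using hp ad by simp_all
  define x where "x = D1f a b c d y"
  have xp: "x > 0" unfolding x_def using D1f_pos[OF pos y(1,2)] .
  define \<phi> where "\<phi> = (a*(1+a) - b*(1+a+c+d))*y^2 + 2*a*(1+a)*y + a*(1+a+b)"
  have den: "((1+a+c+d)*y + a)*(1+y) > 0" using pos y by (auto intro!: mult_pos_pos add_pos_pos)
  have f5: "a*(x/(1+x)) - b*(y/(1+y)) = \<phi> / (((1+a+c+d)*y + a)*(1+y))"
    unfolding x_def \<phi>_def using F5[OF pos y(1,2)] .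
  have UW: "0 < x/(1+x)" "x/(1+x) < 1" "0 < y/(1+y)" "y/(1+y) < 1"
    using rel_UW[OF xp] rel_UW[OF y(1)] by simp_all
  have f1: "EE a b c d {} x y = EE a b c d {1,2} x y" unfolding x_def using F1[OF pos y(1,2)] .
  have f2: "EE a b c d {1} x y - EE a b c d {1,2} x y = (x/(1+x))*(1 - y/(1+y)) * ((1+c)*(1+b) - d*y)"
    using F2[OF xp y(1)] .
  have f3: "EE a b c d {2} x y - EE a b c d {1,2} x y = (y/(1+y))*(1 - x/(1+x)) * ((1+d)*(1+a) - c*x)"
    using F3[OF xp y(1)] .
  have e1: "EE a b c d {1} x y \<ge> EE a b c d {1,2} x y"
  proof -
    have "(x/(1+x))*(1 - y/(1+y)) * ((1+c)*(1+b) - d*y) \<ge> 0"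
      using UW y(3) by (intro mult_nonneg_nonneg) auto
    then show ?thesis using f2 by simp
  qed
  have e2: "EE a b c d {2} x y \<ge> EE a b c d {1,2} x y"
  proof -
    have "(y/(1+y))*(1 - x/(1+x)) * ((1+d)*(1+a) - c*x) \<ge> 0"
      using UW y(4) unfolding x_def by (intro mult_nonneg_nonneg) auto
    then show ?thesis using f3 by simp
  qed
  have sgn1: "a*(x/(1+x)) \<ge> b*(y/(1+y))" if "\<phi> \<ge> 0"
  proof -
    have "\<phi> / (((1+a+c+d)*y + a)*(1+y)) \<ge> 0" using that den by simp
    then show ?thesis using f5 by simp
  qed
  have sgn2: "a*(x/(1+x)) \<le> b*(y/(1+y))" if "\<phi> \<le> 0"
  proof -
    have "\<phi> / (((1+a+c+d)*y + a)*(1+y)) \<le> 0" using that den by (simp add: divide_nonpos_pos)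
    then show ?thesis using f5 by simp
  qed
  have sgn3: "a*(x/(1+x)) = b*(y/(1+y))" if "\<phi> = 0" using f5 that by simp
  have H': "(EE a b c d {1} x y = EE a b c d {1,2} x y \<and> a*(x/(1+x)) \<ge> b*(y/(1+y)))
          \<or> (EE a b c d {2} x y = EE a b c d {1,2} x y \<and> b*(y/(1+y)) \<ge> a*(x/(1+x)))
          \<or> a*(x/(1+x)) = b*(y/(1+y))"
  proof -
    consider (c1) "d*y = (1+c)*(1+b)" "\<phi> \<ge> 0" | (c2) "c*x = (1+d)*(1+a)" "\<phi> \<le> 0" | (c3) "\<phi> = 0"
      using H unfolding \<phi>_def x_def by blast
    then show ?thesis
    proof cases
      case c1 then show ?thesis using f2 sgn1 by simp
    next
      case c2 then show ?thesis using f3 sgn2 by simp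
    next
      case c3 then show ?thesis using sgn3 by simp
    qed
  qed
  show ?thesis unfolding x_def[symmetric]
    using opt_crit[OF hp xp y(1)] f1 e1 e2 H' unfolding ad by simp
qed


theorem theorem1:
  fixes h1 h2 g1 g2 :: real
  assumes "h1 > 0" "h2 > 0" "g1 > 0" "g2 > 0"
  defines "\<delta>1 \<equiv> ((1 + g1\<^sup>2 + g2\<^sup>2) * (1 + h1\<^sup>2 + h2\<^sup>2) + (1 + g2\<^sup>2) * h1\<^sup>2 * h2\<^sup>2)
                  / (g2\<^sup>2 * (1 + g1\<^sup>2 + g2\<^sup>2) * (1 + h1\<^sup>2))"
    and "\<delta>2 \<equiv> (1 + g1\<^sup>2) * (1 + h2\<^sup>2) / g2\<^sup>2"
    and "A \<equiv> h1\<^sup>2 * (1 + h1\<^sup>2) - h2\<^sup>2 * (1 + h1\<^sup>2 + g1\<^sup>2 + g2\<^sup>2)"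
    and "\<delta>3 \<equiv> (- (2 * h1\<^sup>2 * (1 + h1\<^sup>2))
                 - sqrt ((2 * h1\<^sup>2 * (1 + h1\<^sup>2))\<^sup>2
                         - 4 * (h1\<^sup>2 * (1 + h1\<^sup>2) - h2\<^sup>2 * (1 + h1\<^sup>2 + g1\<^sup>2 + g2\<^sup>2))
                             * (h1\<^sup>2 * (1 + h1\<^sup>2 + h2\<^sup>2))))
                / (2 * (h1\<^sup>2 * (1 + h1\<^sup>2) - h2\<^sup>2 * (1 + h1\<^sup>2 + g1\<^sup>2 + g2\<^sup>2)))"
    and "D1of \<equiv> (\<lambda>d::real. ((1 + h1\<^sup>2) * d + (1 + h1\<^sup>2 + h2\<^sup>2)) / ((g1\<^sup>2 + g2\<^sup>2) * d - (1 + h2\<^sup>2)))"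
  shows "(A \<ge> 0 \<or> \<delta>3 \<in> {\<delta>2..} \<longrightarrow>
            optimal_QMF h1 h2 g1 g2 (D1of \<delta>2) \<delta>2 \<and>
            D1of \<delta>2 = ((1 + h1\<^sup>2) * \<delta>2 + (1 + h1\<^sup>2 + h2\<^sup>2)) / (g1\<^sup>2 * (\<delta>2 + (1 + h2\<^sup>2))))
       \<and> (A < 0 \<and> \<delta>3 \<in> {0<..<\<delta>1} \<longrightarrow>
            optimal_QMF h1 h2 g1 g2 (D1of \<delta>1) \<delta>1 \<and>
            D1of \<delta>1 = (1 + g2\<^sup>2) * (1 + h1\<^sup>2) / g1\<^sup>2)
       \<and> (A < 0 \<and> \<delta>3 \<in> {\<delta>1..<\<delta>2} \<longrightarrow>
            optimal_QMF h1 h2 g1 g2 (D1of \<delta>3) \<delta>3)"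
proof -
  define a where "a = h1^2"
  define b where "b = h2^2"
  define c where "c = g1^2"
  define d where "d = g2^2"
  have pos: "a>0" "b>0" "c>0" "d>0" using assms(1-4) unfolding a_def b_def c_def d_def by simp_all
  have d1e: "\<delta>1 = ((1 + c + d) * (1 + a + b) + (1 + d) * a * b) / (d * (1 + c + d) * (1 + a))"
    using assms(5) unfolding a_def b_def c_def d_def by simp
  have d2e: "\<delta>2 = (1 + c) * (1 + b) / d" using assms(6) unfolding b_def c_def d_def by simp
  have Ae: "A = a*(1+a) - b*(1+a+c+d)" using assms(7) unfolding a_def b_def c_def d_def by simp
  have d3e: "\<delta>3 = (- (2*a*(1+a)) - sqrt ((2*a*(1+a))^2 - 4*A*(a*(1+a+b)))) / (2*A)"
    using assms(8) Ae unfolding a_def b_def c_def d_def by simp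
  have De: "D1of = D1f a b c d" using assms(9) unfolding a_def b_def c_def d_def D1f_def by (simp add: fun_eq_iff)
  note df = delta_facts[OF pos, folded d1e d2e]
  have d1p: "\<delta>1 > 0" and g1: "(c+d)*\<delta>1 > 1+b" and le12: "\<delta>1 \<le> \<delta>2"
    and dd2: "d*\<delta>2 = (1+c)*(1+b)" and d2p: "\<delta>2 > 0" and cD1: "c * D1f a b c d \<delta>1 = (1+d)*(1+a)"
    and den2: "(c+d)*\<delta>2 - (1+b) = c*(\<delta>2 + (1+b))" using df by auto
  have g2: "(c+d)*\<delta>2 > 1+b"
  proof -
    have "c*(\<delta>2 + (1+b)) > 0" using pos d2p by (auto intro!: mult_pos_pos add_pos_pos)
    then show ?thesis using den2 by simp
  qed
  define \<phi> where "\<phi> = (\<lambda>y. (a*(1+a) - b*(1+a+c+d))*y^2 + 2*a*(1+a)*y + a*(1+a+b))"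
  have Bn: "2*a*(1+a) \<ge> 0" using pos by simp
  have Cp: "a*(1+a+b) > 0" using pos by (auto intro!: mult_pos_pos add_pos_pos)
  have q1: "\<phi> y \<ge> 0" if "A < 0" "0 \<le> y" "y \<le> \<delta>3" for y
    using quad(1)[OF that(1) Bn Cp, of y] that unfolding \<phi>_def Ae d3e by simp
  have q2: "\<phi> y < 0" if "A < 0" "y > \<delta>3" for y
    using quad(2)[OF that(1) Bn Cp, of y] that unfolding \<phi>_def Ae d3e by simp
  have q3: "\<phi> \<delta>3 = 0" if "A < 0"
    using quad(3)[OF that(1) Bn Cp] that unfolding \<phi>_def Ae d3e by simp
  have pt: "optimal_QMF h1 h2 g1 g2 (D1f a b c d y) y"
    if "y > 0" "(c+d)*y > 1+b" "d*y \<le> (1+c)*(1+b)" "c*D1f a b c d y \<le> (1+d)*(1+a)"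
      "(d*y = (1+c)*(1+b) \<and> \<phi> y \<ge> 0) \<or> (c*D1f a b c d y = (1+d)*(1+a) \<and> \<phi> y \<le> 0) \<or> \<phi> y = 0" for y
    using point[OF assms(1-4) a_def b_def c_def d_def that(1-4)] that(5) unfolding \<phi>_def by simp
  have anti1: "c*D1f a b c d y \<le> (1+d)*(1+a)" if "\<delta>1 \<le> y" for y
  proof -
    have "D1f a b c d y \<le> D1f a b c d \<delta>1" using D1f_anti[OF pos g1 that] .
    then have "c*D1f a b c d y \<le> c*D1f a b c d \<delta>1" using pos by simp
    then show ?thesis using cD1 by simp
  qed
  have part1: "optimal_QMF h1 h2 g1 g2 (D1of \<delta>2) \<delta>2 \<and>
            D1of \<delta>2 = ((1 + h1\<^sup>2) * \<delta>2 + (1 + h1\<^sup>2 + h2\<^sup>2)) / (g1\<^sup>2 * (\<delta>2 + (1 + h2\<^sup>2)))"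
    if "A \<ge> 0 \<or> \<delta>3 \<in> {\<delta>2..}"
  proof
    have ph: "\<phi> \<delta>2 \<ge> 0"
    proof (cases "A \<ge> 0")
      case True
      have "(a*(1+a) - b*(1+a+c+d))*\<delta>2^2 \<ge> 0" using True Ae by simp
      moreover have "2*a*(1+a)*\<delta>2 \<ge> 0" using pos d2p by simp
      ultimately show ?thesis using Cp unfolding \<phi>_def by simp
    next
      case False
      then have "\<delta>3 \<ge> \<delta>2" using that by auto
      then show ?thesis using q1[of \<delta>2] False d2p by simp
    qed
    show "optimal_QMF h1 h2 g1 g2 (D1of \<delta>2) \<delta>2" unfolding De
      using pt[OF d2p g2 _ anti1[OF le12]] dd2 ph by simp
    show "D1of \<delta>2 = ((1 + h1\<^sup>2) * \<delta>2 + (1 + h1\<^sup>2 + h2\<^sup>2)) / (g1\<^sup>2 * (\<delta>2 + (1 + h2\<^sup>2)))"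
      unfolding De D1f_def den2 unfolding a_def b_def c_def by simp
  qed
  have part2: "optimal_QMF h1 h2 g1 g2 (D1of \<delta>1) \<delta>1 \<and>
            D1of \<delta>1 = (1 + g2\<^sup>2) * (1 + h1\<^sup>2) / g1\<^sup>2"
    if "A < 0 \<and> \<delta>3 \<in> {0<..<\<delta>1}"
  proof
    have ph: "\<phi> \<delta>1 < 0" using q2[of \<delta>1] that by auto
    have dl: "d*\<delta>1 \<le> (1+c)*(1+b)" using le12 pos dd2 by (metis mult_left_mono less_imp_le)
    show "optimal_QMF h1 h2 g1 g2 (D1of \<delta>1) \<delta>1" unfolding De
      using pt[OF d1p g1 dl] cD1 ph by simp
    show "D1of \<delta>1 = (1 + g2\<^sup>2) * (1 + h1\<^sup>2) / g1\<^sup>2"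
      unfolding De using cD1 pos unfolding a_def c_def d_def by (simp add: eq_divide_eq mult.commute)
  qed
  have part3: "optimal_QMF h1 h2 g1 g2 (D1of \<delta>3) \<delta>3"
    if "A < 0 \<and> \<delta>3 \<in> {\<delta>1..<\<delta>2}"
  proof -
    have r: "\<delta>1 \<le> \<delta>3" "\<delta>3 < \<delta>2" "A < 0" using that by auto
    have p3: "\<delta>3 > 0" using r d1p by simp
    have "(c+d)*\<delta>1 \<le> (c+d)*\<delta>3" using r pos by (intro mult_left_mono) auto
    then have g3: "(c+d)*\<delta>3 > 1+b" using g1 by linarith
    have dl: "d*\<delta>3 \<le> (1+c)*(1+b)" using r pos dd2 by (metis mult_left_mono less_imp_le)
    show ?thesis unfolding De using pt[OF p3 g3 dl anti1[OF r(1)]] q3[OF r(3)] by simp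
  qed
  show ?thesis using part1 part2 part3 by blast
qed

end
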